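(* Consider the two-agent technology adoption game. There exists $\varepsilon_0>0$ such that for every $\varepsilon\in(0,\varepsilon_0)$ there is a nonempty open interval $J\subset(0,1)$ of costs such that for every $c\in J$: under random seeding there is an equilibrium in which the probability that both agents adopt is strictly greater than the probability that both adopt in every equilibrium under any single deterministic seed (seed 1 or seed 2).
   Context: Fix $\rho\in(0,1)$, $\varepsilon\in(0,1)$, two linked agents $1,2$, state $\theta\in\{g,b\}$ with $\Pr(\theta=g)=\rho$; in state $b$ no messages are sent. Every transmission is lost independently with probability $\varepsilon$. Deterministic seed $i$: in state $g$ the planner sends to $i$, who, if she receives it, forwards it to the other agent. Random seeding: the planner's seed is $1$ or $2$ with probability $1/2$ each, independently of everything else, and is not observed by the agents; then messages flow as under that deterministic seed. In all cases each agent observes only whether she received a message. Technology adoption game with cost $c\in(0,1)$: each agent chooses $a_i\in\{0,1\}$ (possibly mixed) as a function of her information; payoff $a_i(\mathbf 1[\theta=g\text{ and both adopt}]-c)$; equilibria are Bayesian Nash equilibria. *)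

theory Defs
  imports Complex_Main
begin

text \<open>Joint law of (theta, signal of seeded agent, signal of the other agent) under a
  deterministic seed. theta = True means state g. The seeded agent receives the planner's
  message with prob. 1-eps (only in state g); if she receives it she forwards it, and the
  other agent receives it with prob. 1-eps.\<close>
definition seed_dist :: "real \<Rightarrow> real \<Rightarrow> bool \<Rightarrow> bool \<Rightarrow> bool \<Rightarrow> real" where
  "seed_dist \<rho> \<epsilon> th rs ro =
     (if th then \<rho> * (if rs \<and> ro then (1 - \<epsilon>)^2
                      else if rs \<and> \<not> ro then (1 - \<epsilon>) * \<epsilon>
                      else if \<not> rs \<and> \<not> ro then \<epsilon> else 0)
      else (1 - \<rho>) * (if \<not> rs \<and> \<not> ro then 1 else 0))"

text \<open>Information structures: joint probabilities P theta s1 s2 (s_i = agent i received).\<close>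
definition seed1 :: "real \<Rightarrow> real \<Rightarrow> bool \<Rightarrow> bool \<Rightarrow> bool \<Rightarrow> real" where
  "seed1 \<rho> \<epsilon> th s1 s2 = seed_dist \<rho> \<epsilon> th s1 s2"

definition seed2 :: "real \<Rightarrow> real \<Rightarrow> bool \<Rightarrow> bool \<Rightarrow> bool \<Rightarrow> real" where
  "seed2 \<rho> \<epsilon> th s1 s2 = seed_dist \<rho> \<epsilon> th s2 s1"

definition random_seed :: "real \<Rightarrow> real \<Rightarrow> bool \<Rightarrow> bool \<Rightarrow> bool \<Rightarrow> real" where
  "random_seed \<rho> \<epsilon> th s1 s2 = (seed1 \<rho> \<epsilon> th s1 s2 + seed2 \<rho> \<epsilon> th s1 s2) / 2"

definition mixed :: "(bool \<Rightarrow> real) \<Rightarrow> bool" where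
  "mixed \<sigma> \<longleftrightarrow> (\<forall>s. 0 \<le> \<sigma> s \<and> \<sigma> s \<le> 1)"

definition payoff1 :: "(bool \<Rightarrow> bool \<Rightarrow> bool \<Rightarrow> real) \<Rightarrow> real \<Rightarrow> (bool \<Rightarrow> real) \<Rightarrow> (bool \<Rightarrow> real) \<Rightarrow> real" where
  "payoff1 P c \<sigma>1 \<sigma>2 = (\<Sum>th\<in>UNIV. \<Sum>s1\<in>UNIV. \<Sum>s2\<in>UNIV.
      P th s1 s2 * \<sigma>1 s1 * ((if th then \<sigma>2 s2 else 0) - c))"

definition payoff2 :: "(bool \<Rightarrow> bool \<Rightarrow> bool \<Rightarrow> real) \<Rightarrow> real \<Rightarrow> (bool \<Rightarrow> real) \<Rightarrow> (bool \<Rightarrow> real) \<Rightarrow> real" where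
  "payoff2 P c \<sigma>1 \<sigma>2 = (\<Sum>th\<in>UNIV. \<Sum>s1\<in>UNIV. \<Sum>s2\<in>UNIV.
      P th s1 s2 * \<sigma>2 s2 * ((if th then \<sigma>1 s1 else 0) - c))"

definition is_BNE :: "(bool \<Rightarrow> bool \<Rightarrow> bool \<Rightarrow> real) \<Rightarrow> real \<Rightarrow> (bool \<Rightarrow> real) \<Rightarrow> (bool \<Rightarrow> real) \<Rightarrow> bool" where
  "is_BNE P c \<sigma>1 \<sigma>2 \<longleftrightarrow> mixed \<sigma>1 \<and> mixed \<sigma>2 \<and>
     (\<forall>\<tau>. mixed \<tau> \<longrightarrow> payoff1 P c \<tau> \<sigma>2 \<le> payoff1 P c \<sigma>1 \<sigma>2) \<and>
     (\<forall>\<tau>. mixed \<tau> \<longrightarrow> payoff2 P c \<sigma>1 \<tau> \<le> payoff2 P c \<sigma>1 \<sigma>2)"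

definition both_adopt :: "(bool \<Rightarrow> bool \<Rightarrow> bool \<Rightarrow> real) \<Rightarrow> (bool \<Rightarrow> real) \<Rightarrow> (bool \<Rightarrow> real) \<Rightarrow> real" where
  "both_adopt P \<sigma>1 \<sigma>2 = (\<Sum>th\<in>UNIV. \<Sum>s1\<in>UNIV. \<Sum>s2\<in>UNIV. P th s1 s2 * \<sigma>1 s1 * \<sigma>2 s2)"

end

theory Submission
  imports Defs
begin

definition A1 where "A1 P c \<sigma>2 s = (\<Sum>th\<in>UNIV. \<Sum>s2\<in>UNIV. P th s s2 * ((if th then \<sigma>2 s2 else 0) - c))"
definition A2 where "A2 P c \<sigma>1 s = (\<Sum>th\<in>UNIV. \<Sum>s1\<in>UNIV. P th s1 s * ((if th then \<sigma>1 s1 else 0) - c))"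

lemma pay1: "payoff1 P c \<tau> \<sigma>2 = \<tau> True * A1 P c \<sigma>2 True + \<tau> False * A1 P c \<sigma>2 False"
  by (simp add: payoff1_def A1_def UNIV_bool algebra_simps)
lemma pay2: "payoff2 P c \<sigma>1 \<tau> = \<tau> True * A2 P c \<sigma>1 True + \<tau> False * A2 P c \<sigma>1 False"
  by (simp add: payoff2_def A2_def UNIV_bool algebra_simps)

lemma dev1: assumes "is_BNE P c \<sigma>1 \<sigma>2" "A1 P c \<sigma>2 s < 0" shows "\<sigma>1 s = 0"
proof -
  have m: "mixed \<sigma>1" and b: "\<forall>\<tau>. mixed \<tau> \<longrightarrow> payoff1 P c \<tau> \<sigma>2 \<le> payoff1 P c \<sigma>1 \<sigma>2"
    using assms(1) unfolding is_BNE_def by auto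
  have "mixed (\<sigma>1(s:=0))" using m unfolding mixed_def by auto
  with b have "payoff1 P c (\<sigma>1(s:=0)) \<sigma>2 \<le> payoff1 P c \<sigma>1 \<sigma>2" by blast
  hence "\<sigma>1 s * A1 P c \<sigma>2 s \<ge> 0" unfolding pay1 by (cases s) auto
  moreover have "\<sigma>1 s \<ge> 0" using m unfolding mixed_def by auto
  ultimately show ?thesis using assms(2)
    by (metis mult_pos_neg order_less_le not_le)
qed

lemma dev2: assumes "is_BNE P c \<sigma>1 \<sigma>2" "A2 P c \<sigma>1 s < 0" shows "\<sigma>2 s = 0"
proof -
  have m: "mixed \<sigma>2" and b: "\<forall>\<tau>. mixed \<tau> \<longrightarrow> payoff2 P c \<sigma>1 \<tau> \<le> payoff2 P c \<sigma>1 \<sigma>2"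
    using assms(1) unfolding is_BNE_def by auto
  have "mixed (\<sigma>2(s:=0))" using m unfolding mixed_def by auto
  with b have "payoff2 P c \<sigma>1 (\<sigma>2(s:=0)) \<le> payoff2 P c \<sigma>1 \<sigma>2" by blast
  hence "\<sigma>2 s * A2 P c \<sigma>1 s \<ge> 0" unfolding pay2 by (cases s) auto
  moreover have "\<sigma>2 s \<ge> 0" using m unfolding mixed_def by auto
  ultimately show ?thesis using assms(2)
    by (metis mult_pos_neg order_less_le not_le)
qed

lemma s1A1: "A1 (seed1 \<rho> \<epsilon>) c \<sigma>2 s = (if s then \<rho>*((1-\<epsilon>)^2*(\<sigma>2 True - c) + (1-\<epsilon>)*\<epsilon>*(\<sigma>2 False - c))
   else \<rho>*\<epsilon>*(\<sigma>2 False - c) + (1-\<rho>)*(-c))"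
  by (cases s) (simp_all add: A1_def seed1_def seed_dist_def UNIV_bool algebra_simps)
lemma s1A2: "A2 (seed1 \<rho> \<epsilon>) c \<sigma>1 s = (if s then \<rho>*(1-\<epsilon>)^2*(\<sigma>1 True - c)
   else \<rho>*(1-\<epsilon>)*\<epsilon>*(\<sigma>1 True - c) + \<rho>*\<epsilon>*(\<sigma>1 False - c) + (1-\<rho>)*(-c))"
  by (cases s) (simp_all add: A2_def seed1_def seed_dist_def UNIV_bool algebra_simps)
lemma s2A2: "A2 (seed2 \<rho> \<epsilon>) c \<sigma>1 s = (if s then \<rho>*((1-\<epsilon>)^2*(\<sigma>1 True - c) + (1-\<epsilon>)*\<epsilon>*(\<sigma>1 False - c))
   else \<rho>*\<epsilon>*(\<sigma>1 False - c) + (1-\<rho>)*(-c))"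
  by (cases s) (simp_all add: A2_def seed2_def seed_dist_def UNIV_bool algebra_simps)
lemma s2A1: "A1 (seed2 \<rho> \<epsilon>) c \<sigma>2 s = (if s then \<rho>*(1-\<epsilon>)^2*(\<sigma>2 True - c)
   else \<rho>*(1-\<epsilon>)*\<epsilon>*(\<sigma>2 True - c) + \<rho>*\<epsilon>*(\<sigma>2 False - c) + (1-\<rho>)*(-c))"
  by (cases s) (simp_all add: A1_def seed2_def seed_dist_def UNIV_bool algebra_simps)
lemma rA1: "A1 (random_seed \<rho> \<epsilon>) c \<sigma>2 s = (if s then \<rho>*((1-\<epsilon>)^2*(\<sigma>2 True - c) + (1-\<epsilon>)*\<epsilon>/2*(\<sigma>2 False - c))
   else \<rho>*(1-\<epsilon>)*\<epsilon>/2*(\<sigma>2 True - c) + \<rho>*\<epsilon>*(\<sigma>2 False - c) + (1-\<rho>)*(-c))"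
  by (cases s; simp add: A1_def random_seed_def seed1_def seed2_def seed_dist_def UNIV_bool; (simp add: field_simps)?; (simp add: algebra_simps)?)
lemma rA2: "A2 (random_seed \<rho> \<epsilon>) c \<sigma>1 s = (if s then \<rho>*((1-\<epsilon>)^2*(\<sigma>1 True - c) + (1-\<epsilon>)*\<epsilon>/2*(\<sigma>1 False - c))
   else \<rho>*(1-\<epsilon>)*\<epsilon>/2*(\<sigma>1 True - c) + \<rho>*\<epsilon>*(\<sigma>1 False - c) + (1-\<rho>)*(-c))"
  by (cases s; simp add: A2_def random_seed_def seed1_def seed2_def seed_dist_def UNIV_bool; (simp add: field_simps)?; (simp add: algebra_simps)?)
lemma ba1: "both_adopt (seed1 \<rho> \<epsilon>) \<sigma>1 \<sigma>2 = \<rho>*((1-\<epsilon>)^2*\<sigma>1 True*\<sigma>2 True + (1-\<epsilon>)*\<epsilon>*\<sigma>1 True*\<sigma>2 False + \<epsilon>*\<sigma>1 False*\<sigma>2 False) + (1-\<rho>)*\<sigma>1 False*\<sigma>2 False"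
  by (simp add: both_adopt_def seed1_def seed_dist_def UNIV_bool algebra_simps)
lemma ba2: "both_adopt (seed2 \<rho> \<epsilon>) \<sigma>1 \<sigma>2 = \<rho>*((1-\<epsilon>)^2*\<sigma>1 True*\<sigma>2 True + (1-\<epsilon>)*\<epsilon>*\<sigma>1 False*\<sigma>2 True + \<epsilon>*\<sigma>1 False*\<sigma>2 False) + (1-\<rho>)*\<sigma>1 False*\<sigma>2 False"
  by (simp add: both_adopt_def seed2_def seed_dist_def UNIV_bool algebra_simps)
lemma bar: "both_adopt (random_seed \<rho> \<epsilon>) (\<lambda>s. if s then 1 else 0) (\<lambda>s. if s then 1 else 0) = \<rho>*(1-\<epsilon>)^2"
  by (simp add: both_adopt_def random_seed_def seed1_def seed2_def seed_dist_def UNIV_bool algebra_simps)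

theorem mainTheorem13:
  fixes \<rho> :: real
  assumes "0 < \<rho>" and "\<rho> < 1"
  shows "\<exists>\<epsilon>0 > 0. \<forall>\<epsilon>. 0 < \<epsilon> \<and> \<epsilon> < 1 \<and> \<epsilon> < \<epsilon>0 \<longrightarrow>
           (\<exists>a b. 0 \<le> a \<and> a < b \<and> b \<le> 1 \<and>
              (\<forall>c. a < c \<and> c < b \<longrightarrow>
                 (\<exists>\<sigma>1 \<sigma>2. is_BNE (random_seed \<rho> \<epsilon>) c \<sigma>1 \<sigma>2 \<and>
                    (\<forall>\<tau>1 \<tau>2. is_BNE (seed1 \<rho> \<epsilon>) c \<tau>1 \<tau>2 \<longrightarrow>
                        both_adopt (seed1 \<rho> \<epsilon>) \<tau>1 \<tau>2 < both_adopt (random_seed \<rho> \<epsilon>) \<sigma>1 \<sigma>2) \<and>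
                    (\<forall>\<tau>1 \<tau>2. is_BNE (seed2 \<rho> \<epsilon>) c \<tau>1 \<tau>2 \<longrightarrow>
                        both_adopt (seed2 \<rho> \<epsilon>) \<tau>1 \<tau>2 < both_adopt (random_seed \<rho> \<epsilon>) \<sigma>1 \<sigma>2))))"
proof -
  define e0 where "e0 = min (1/2) ((1-\<rho>)/(4*\<rho>))"
  have e0pos: "e0 > 0" using assms unfolding e0_def by auto
  show ?thesis
  proof (rule exI[of _ e0], intro conjI e0pos allI impI)
    fix \<epsilon> :: real
    assume "0 < \<epsilon> \<and> \<epsilon> < 1 \<and> \<epsilon> < e0"
    hence e: "0 < \<epsilon>" "\<epsilon> < 1/2" "\<epsilon> < (1-\<rho>)/(4*\<rho>)" unfolding e0_def by auto
    have re: "\<rho>*\<epsilon> < (1-\<rho>)/4" using e(3) assms by (simp add: field_simps)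
    define b where "b = 2*(1-\<epsilon>)/(2-\<epsilon>)"
    have ab: "1-\<epsilon> < b" "b \<le> 1" using e unfolding b_def by (simp_all add: field_simps)
    show "\<exists>a b. 0 \<le> a \<and> a < b \<and> b \<le> 1 \<and>
              (\<forall>c. a < c \<and> c < b \<longrightarrow>
                 (\<exists>\<sigma>1 \<sigma>2. is_BNE (random_seed \<rho> \<epsilon>) c \<sigma>1 \<sigma>2 \<and>
                    (\<forall>\<tau>1 \<tau>2. is_BNE (seed1 \<rho> \<epsilon>) c \<tau>1 \<tau>2 \<longrightarrow>
                        both_adopt (seed1 \<rho> \<epsilon>) \<tau>1 \<tau>2 < both_adopt (random_seed \<rho> \<epsilon>) \<sigma>1 \<sigma>2) \<and>
                    (\<forall>\<tau>1 \<tau>2. is_BNE (seed2 \<rho> \<epsilon>) c \<tau>1 \<tau>2 \<longrightarrow>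
                        both_adopt (seed2 \<rho> \<epsilon>) \<tau>1 \<tau>2 < both_adopt (random_seed \<rho> \<epsilon>) \<sigma>1 \<sigma>2)))"
    proof (rule exI[of _ "1-\<epsilon>"], rule exI[of _ b], intro conjI allI impI)
      show "0 \<le> 1 - \<epsilon>" "1 - \<epsilon> < b" "b \<le> 1" using e ab by auto
      fix c assume "1 - \<epsilon> < c \<and> c < b"
      hence c: "1 - \<epsilon> < c" "c < b" by auto
      have cb: "c*(2-\<epsilon>) < 2*(1-\<epsilon>)" using c(2) e unfolding b_def by (simp add: field_simps)
      have c1: "c < 1" using c ab by auto
      have ch: "c > 1/2" using c e by auto
      define \<sigma> :: "bool \<Rightarrow> real" where "\<sigma> = (\<lambda>s. if s then 1 else 0)"
      have ms: "mixed \<sigma>" unfolding mixed_def \<sigma>_def by auto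
      have rT: "A1 (random_seed \<rho> \<epsilon>) c \<sigma> True \<ge> 0" "A2 (random_seed \<rho> \<epsilon>) c \<sigma> True \<ge> 0"
      proof -
        have "(1-\<epsilon>)^2*(1 - c) + (1-\<epsilon>)*\<epsilon>/2*(0 - c) = (1-\<epsilon>)/2 * (2*(1-\<epsilon>) - c*(2-\<epsilon>))"
          by (simp add: field_simps power2_eq_square; simp add: algebra_simps)
        moreover have "(1-\<epsilon>)/2 * (2*(1-\<epsilon>) - c*(2-\<epsilon>)) \<ge> 0" using e cb by simp
        ultimately have "(1-\<epsilon>)^2*(1 - c) + (1-\<epsilon>)*\<epsilon>/2*(0 - c) \<ge> 0" by simp
        hence "\<rho>*((1-\<epsilon>)^2*(1 - c) + (1-\<epsilon>)*\<epsilon>/2*(0 - c)) \<ge> 0" using assms by simp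
        thus "A1 (random_seed \<rho> \<epsilon>) c \<sigma> True \<ge> 0" "A2 (random_seed \<rho> \<epsilon>) c \<sigma> True \<ge> 0"
          unfolding rA1 rA2 \<sigma>_def by simp_all
      qed
      have key: "\<rho>*\<epsilon> < (1-\<rho>)*c"
      proof -
        have "(1-\<rho>)*(1/2) < (1-\<rho>)*c" using ch assms by (intro mult_strict_left_mono) auto
        moreover have "(1-\<rho>)/4 \<le> (1-\<rho>)*(1/2)" using assms by simp
        ultimately show ?thesis using re by linarith
      qed
      have rF: "A1 (random_seed \<rho> \<epsilon>) c \<sigma> False \<le> 0" "A2 (random_seed \<rho> \<epsilon>) c \<sigma> False \<le> 0"
      proof -
        have "\<rho>*(1-\<epsilon>)*\<epsilon>/2*(1 - c) \<le> \<rho>*\<epsilon>"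
        proof -
          have "(1-\<epsilon>)/2*(1 - c) \<le> 1" using e c1 ch by (intro mult_le_one) auto
          hence "(\<rho>*\<epsilon>)*((1-\<epsilon>)/2*(1 - c)) \<le> (\<rho>*\<epsilon>)*1" using assms e by (intro mult_left_mono) auto
          thus ?thesis by (simp add: algebra_simps)
        qed
        moreover have "\<rho>*\<epsilon>*c \<ge> 0" using assms e ch by simp
        ultimately have "\<rho>*(1-\<epsilon>)*\<epsilon>/2*(1 - c) + \<rho>*\<epsilon>*(0 - c) + (1-\<rho>)*(-c) \<le> 0"
          using key by (simp only: mult_minus_right diff_0 mult_minus_right)
        thus "A1 (random_seed \<rho> \<epsilon>) c \<sigma> False \<le> 0" "A2 (random_seed \<rho> \<epsilon>) c \<sigma> False \<le> 0"
          unfolding rA1 rA2 \<sigma>_def by simp_all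
      qed
      have bne: "is_BNE (random_seed \<rho> \<epsilon>) c \<sigma> \<sigma>"
        unfolding is_BNE_def
      proof (intro conjI ms allI impI)
        fix \<tau> assume "mixed \<tau>"
        hence t: "0 \<le> \<tau> True" "\<tau> True \<le> 1" "0 \<le> \<tau> False" unfolding mixed_def by auto
        have "\<tau> True * A1 (random_seed \<rho> \<epsilon>) c \<sigma> True \<le> 1 * A1 (random_seed \<rho> \<epsilon>) c \<sigma> True"
          using t rT by (intro mult_right_mono) auto
        moreover have "\<tau> False * A1 (random_seed \<rho> \<epsilon>) c \<sigma> False \<le> 0" using t rF by (simp add: mult_nonneg_nonpos)
        ultimately show "payoff1 (random_seed \<rho> \<epsilon>) c \<tau> \<sigma> \<le> payoff1 (random_seed \<rho> \<epsilon>) c \<sigma> \<sigma>"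
          unfolding pay1 by (simp add: \<sigma>_def)
        have "\<tau> True * A2 (random_seed \<rho> \<epsilon>) c \<sigma> True \<le> 1 * A2 (random_seed \<rho> \<epsilon>) c \<sigma> True"
          using t rT by (intro mult_right_mono) auto
        moreover have "\<tau> False * A2 (random_seed \<rho> \<epsilon>) c \<sigma> False \<le> 0" using t rF by (simp add: mult_nonneg_nonpos)
        ultimately show "payoff2 (random_seed \<rho> \<epsilon>) c \<sigma> \<tau> \<le> payoff2 (random_seed \<rho> \<epsilon>) c \<sigma> \<sigma>"
          unfolding pay2 by (simp add: \<sigma>_def)
      qed
      have bpos: "both_adopt (random_seed \<rho> \<epsilon>) \<sigma> \<sigma> > 0"
        unfolding \<sigma>_def bar using assms e by simp
      have stepF: "\<rho>*\<epsilon>*(x - c) + (1-\<rho>)*(-c) < 0" if "x \<le> 1" for x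
      proof -
        have "\<rho>*\<epsilon>*(x - c) \<le> \<rho>*\<epsilon>*(1-c)" using that assms e by (intro mult_left_mono) auto
        moreover have "\<rho>*\<epsilon>*(1-c) \<le> \<rho>*\<epsilon>*1" using ch assms e by (intro mult_left_mono) auto
        ultimately show ?thesis using key by (simp add: algebra_simps)
      qed
      have stepF2: "\<rho>*(1-\<epsilon>)*\<epsilon>*(x - c) + \<rho>*\<epsilon>*(0 - c) + (1-\<rho>)*(-c) < 0" if "x \<le> 1" for x
      proof -
        have "(\<rho>*\<epsilon>)*((1-\<epsilon>)*(x - c)) \<le> (\<rho>*\<epsilon>)*1"
        proof (rule mult_left_mono)
          have "(1-\<epsilon>)*(x - c) \<le> (1-\<epsilon>)*1" using that e ch by (intro mult_left_mono) auto
          thus "(1-\<epsilon>)*(x - c) \<le> 1" using e by (simp only: mult_1_right; linarith)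
        qed (use assms e in auto)
        moreover have "\<rho>*\<epsilon>*c \<ge> 0" using assms e ch by simp
        ultimately show ?thesis using key by (simp add: algebra_simps)
      qed
      have stepT: "\<rho>*((1-\<epsilon>)^2*(x - c) + (1-\<epsilon>)*\<epsilon>*(0 - c)) < 0" if "x \<le> 1" for x
      proof -
        have "(1-\<epsilon>)^2*(x - c) \<le> (1-\<epsilon>)^2*(1-c)" using that by (intro mult_left_mono) auto
        moreover have "(1-\<epsilon>)^2*(1-c) + (1-\<epsilon>)*\<epsilon>*(0 - c) = (1-\<epsilon>)*(1-\<epsilon>-c)"
          by (simp add: algebra_simps power2_eq_square)
        moreover have "(1-\<epsilon>)*(1-\<epsilon>-c) < 0" using e c by (intro mult_pos_neg) auto
        ultimately have "(1-\<epsilon>)^2*(x - c) + (1-\<epsilon>)*\<epsilon>*(0 - c) < 0" by linarith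
        thus ?thesis using assms by (simp add: mult_pos_neg)
      qed
      have stepT2: "\<rho>*(1-\<epsilon>)^2*(x - c) < 0" if "x = 0" for x
        using assms e c1 ch that by (simp add: mult_pos_neg)
      show "\<exists>\<sigma>1 \<sigma>2. is_BNE (random_seed \<rho> \<epsilon>) c \<sigma>1 \<sigma>2 \<and>
                    (\<forall>\<tau>1 \<tau>2. is_BNE (seed1 \<rho> \<epsilon>) c \<tau>1 \<tau>2 \<longrightarrow>
                        both_adopt (seed1 \<rho> \<epsilon>) \<tau>1 \<tau>2 < both_adopt (random_seed \<rho> \<epsilon>) \<sigma>1 \<sigma>2) \<and>
                    (\<forall>\<tau>1 \<tau>2. is_BNE (seed2 \<rho> \<epsilon>) c \<tau>1 \<tau>2 \<longrightarrow>
                        both_adopt (seed2 \<rho> \<epsilon>) \<tau>1 \<tau>2 < both_adopt (random_seed \<rho> \<epsilon>) \<sigma>1 \<sigma>2)"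
      proof (rule exI[of _ \<sigma>], rule exI[of _ \<sigma>], intro conjI bne allI impI)
        fix \<tau>1 \<tau>2 assume B: "is_BNE (seed1 \<rho> \<epsilon>) c \<tau>1 \<tau>2"
        hence t: "\<tau>1 True \<le> 1" "\<tau>2 True \<le> 1" "\<tau>1 False \<le> 1" "\<tau>2 False \<le> 1"
          unfolding is_BNE_def mixed_def by auto
        have z1: "\<tau>1 False = 0" by (rule dev1[OF B]) (use stepF[OF t(4)] in \<open>simp add: s1A1\<close>)
        have z2: "\<tau>2 False = 0" by (rule dev2[OF B]) (use stepF2[OF t(1)] in \<open>simp add: s1A2 z1\<close>)
        have z3: "\<tau>1 True = 0" by (rule dev1[OF B]) (use stepT[OF t(2)] in \<open>simp add: s1A1 z2\<close>)
        show "both_adopt (seed1 \<rho> \<epsilon>) \<tau>1 \<tau>2 < both_adopt (random_seed \<rho> \<epsilon>) \<sigma> \<sigma>"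
          using bpos by (simp add: ba1 z1 z2 z3)
      next
        fix \<tau>1 \<tau>2 assume B: "is_BNE (seed2 \<rho> \<epsilon>) c \<tau>1 \<tau>2"
        hence t: "\<tau>1 True \<le> 1" "\<tau>2 True \<le> 1" "\<tau>1 False \<le> 1" "\<tau>2 False \<le> 1"
          unfolding is_BNE_def mixed_def by auto
        have z1: "\<tau>2 False = 0" by (rule dev2[OF B]) (use stepF[OF t(3)] in \<open>simp add: s2A2\<close>)
        have z2: "\<tau>1 False = 0" by (rule dev1[OF B]) (use stepF2[OF t(2)] in \<open>simp add: s2A1 z1\<close>)
        have z3: "\<tau>2 True = 0" by (rule dev2[OF B]) (use stepT[OF t(1)] in \<open>simp add: s2A2 z2\<close>)
        show "both_adopt (seed2 \<rho> \<epsilon>) \<tau>1 \<tau>2 < both_adopt (random_seed \<rho> \<epsilon>) \<sigma> \<sigma>"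
          using bpos by (simp add: ba2 z1 z2 z3)
      qed
    qed
  qed
qed
end
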